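(* Fix $\lambda\in[0,1]$. Define $f(\mathbf q,\lambda)$ for vectors $\mathbf q=(q_{i,j}^{(k)})_{i\ne j,\,k=\pm1}$ by $$f_{i,j}^{(k)}(\mathbf q,\lambda)=\lambda\Big(p_{i,j}^{(k)}+\sum_{m\ne i,j}p_{i,m}^{(k)}q_{m,j}^{(k)}+\sum_{m\ne i}p_{i,m}^{(-k)}q_{m,i}^{(-k)}q_{i,j}^{(k)}\Big),$$ and define $\mathbf a_0(\lambda)=f(\mathbf 0,\lambda)$, $\mathbf a_{n+1}(\lambda)=f(\mathbf a_n(\lambda),\lambda)$. Then for every $n\ge0$ and every index $(i,j,k)$, $$(\mathbf a_n(\lambda))_{i,j}^{(k)}\le\sum_{m=0}^{2^{n+1}-1}P_{e_i}\big(T(0,A_{i,j}^{(k)})=m\big)\lambda^m.$$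
   Context: Fix an integer $N\ge 3$. Let $\mathcal G_N$ be the groupoid with object set $\{1,\dots,N\}$ generated by arrows $A_{i,j}^{(k)}$, $i\neq j\in\{1,\dots,N\}$, $k\in\{-1,1\}$, with source $i$ and target $j$, subject to the relations $A_{i,j}^{(k)}A_{j,\ell}^{(k)}=A_{i,\ell}^{(k)}$ for all $i,j,\ell$, $k$, with the convention $A_{i,i}^{(k)}:=e_i$ (unit at object $i$). Let $\mathcal A$ be its arrow set. Let $\{W_n\}_{n\ge0}$ be the Markov chain on $\mathcal A$ with $P(W_{n+1}=y\mid W_n=x)=p_{i,j}^{(k)}$ if $x^{-1}y=A_{i,j}^{(k)}$ with $i\ne j$ and $0$ otherwise, where $p_{i,j}^{(k)}\in(0,1)$ and $\sum_{j\ne i}\sum_{k=\pm1}p_{i,j}^{(k)}=1$ for each $i$; $P_x$ denotes the law with $W_0=x$. For $x\in\mathcal A$ let $T(0,x)=\inf\{n\ge0:W_n=W_0x\}$ (possibly $\infty$). *)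

theory Defs
  imports Complex_Main
begin

text \<open>Generators A_{i,j}^{(k)} are encoded as triples (i, j, k) with source i,
  target j and label k in {-1, 1}.  Arrows of the groupoid G_N that are reachable
  by the walk are represented by composable words of generators, modulo the
  congruence generated by the defining relations A_{i,j}^k A_{j,l}^k = A_{i,l}^k
  (with A_{i,i}^k the unit).\<close>

type_synonym gen = "nat \<times> nat \<times> int"

definition gen_ok :: "nat \<Rightarrow> gen \<Rightarrow> bool" where
  "gen_ok N g = (case g of (a, b, k) \<Rightarrow>
     a \<in> {1..N} \<and> b \<in> {1..N} \<and> a \<noteq> b \<and> k \<in> {-1, 1})"

fun path_from :: "nat \<Rightarrow> nat \<Rightarrow> gen list \<Rightarrow> bool" where
  "path_from N v [] = True"
| "path_from N v ((a, b, k) # s) = (a = v \<and> gen_ok N (a, b, k) \<and> path_from N b s)"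

inductive word_step :: "nat \<Rightarrow> gen list \<Rightarrow> gen list \<Rightarrow> bool" for N where
  merge: "\<lbrakk>gen_ok N (i, j, k); gen_ok N (j, l, k); l \<noteq> i\<rbrakk> \<Longrightarrow>
     word_step N (u @ [(i, j, k), (j, l, k)] @ v) (u @ [(i, l, k)] @ v)"
| cancel: "\<lbrakk>gen_ok N (i, j, k); gen_ok N (j, i, k)\<rbrakk> \<Longrightarrow>
     word_step N (u @ [(i, j, k), (j, i, k)] @ v) (u @ v)"

definition word_eq :: "nat \<Rightarrow> gen list \<Rightarrow> gen list \<Rightarrow> bool" where
  "word_eq N = (sup (word_step N) (word_step N)\<inverse>\<inverse>)\<^sup>*\<^sup>*"

text \<open>P_{e_i}(T(0,x) = m): sum over all step sequences of length m from e_i whose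
  product first equals e_i x = x at time m, weighted by the transition probabilities.\<close>
definition hit_prob :: "nat \<Rightarrow> (nat \<Rightarrow> nat \<Rightarrow> int \<Rightarrow> real) \<Rightarrow> nat \<Rightarrow> gen \<Rightarrow> nat \<Rightarrow> real" where
  "hit_prob N p i x m =
     (\<Sum>s \<in> {s. length s = m \<and> path_from N i s \<and> word_eq N s [x]
                \<and> (\<forall>n<m. \<not> word_eq N (take n s) [x])}.
        prod_list (map (\<lambda>(a, b, k). p a b k) s))"

definition fmap :: "nat \<Rightarrow> (nat \<Rightarrow> nat \<Rightarrow> int \<Rightarrow> real) \<Rightarrow> (nat \<Rightarrow> nat \<Rightarrow> int \<Rightarrow> real)
    \<Rightarrow> real \<Rightarrow> nat \<Rightarrow> nat \<Rightarrow> int \<Rightarrow> real" where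
  "fmap N p q lam i j k = lam * (p i j k
      + (\<Sum>m \<in> {1..N} - {i, j}. p i m k * q m j k)
      + (\<Sum>m \<in> {1..N} - {i}. p i m (-k) * q m i (-k) * q i j k))"

primrec aseq :: "nat \<Rightarrow> (nat \<Rightarrow> nat \<Rightarrow> int \<Rightarrow> real) \<Rightarrow> real \<Rightarrow> nat \<Rightarrow> nat \<Rightarrow> nat \<Rightarrow> int \<Rightarrow> real" where
  "aseq N p lam 0 = fmap N p (\<lambda>_ _ _. 0) lam"
| "aseq N p lam (Suc n) = fmap N p (aseq N p lam n) lam"

end

theory Submission
  imports Defs
begin


definition mg :: "nat \<Rightarrow> gen \<Rightarrow> gen \<Rightarrow> bool" where
  "mg N h g = (gen_ok N h \<and> gen_ok N g \<and> snd (snd h) = snd (snd g) \<and> fst (snd h) = fst g)"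

definition push :: "nat \<Rightarrow> gen list \<Rightarrow> gen \<Rightarrow> gen list" where
  "push N st g = (case st of [] \<Rightarrow> [g] | h # st' \<Rightarrow>
     if mg N h g then (if fst h = fst (snd g) then st' else (fst h, fst (snd g), snd (snd g)) # st')
     else g # st)"

definition nf :: "nat \<Rightarrow> gen list \<Rightarrow> gen list" where
  "nf N s = foldl (push N) [] s"

fun red :: "nat \<Rightarrow> gen list \<Rightarrow> bool" where
  "red N (x # y # r) = (\<not> mg N y x \<and> red N (y # r))"
| "red N _ = True"

lemma nf_append: "nf N (a @ b) = foldl (push N) (nf N a) b"
  by (simp add: nf_def)

lemma nf_snoc: "nf N (a @ [g]) = push N (nf N a) g"
  by (simp add: nf_def)

lemma nf_Nil[simp]: "nf N [] = []" by (simp add: nf_def)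

lemma red_push: "red N st \<Longrightarrow> red N (push N st g)"
proof (cases st)
  case Nil then show ?thesis by (simp add: push_def)
next
  case (Cons h st')
  assume r: "red N st"
  show ?thesis
  proof (cases st')
    case Nil then show ?thesis using Cons by (auto simp: push_def)
  next
    case (Cons h' st'')
    show ?thesis using r Cons \<open>st = h # st'\<close>
      by (auto simp: push_def mg_def gen_ok_def split: prod.splits)
  qed
qed

lemma red_nf: "red N (nf N s)"
proof (induction s rule: rev_induct)
  case Nil then show ?case by simp
next
  case (snoc x xs) then show ?case by (simp add: nf_snoc red_push)
qed

lemma push_merge:
  assumes "red N st" "gen_ok N (i, j, k)" "gen_ok N (j, l, k)" "l \<noteq> i"
  shows "push N (push N st (i, j, k)) (j, l, k) = push N st (i, l, k)"
proof (cases st)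
  case Nil then show ?thesis using assms by (auto simp: push_def mg_def gen_ok_def)
next
  case (Cons h st')
  show ?thesis
  proof (cases st')
    case Nil then show ?thesis using assms Cons by (auto simp: push_def mg_def gen_ok_def split: prod.splits)
  next
    case (Cons h' st'')
    show ?thesis using assms Cons \<open>st = h # st'\<close>
      by (auto simp: push_def mg_def gen_ok_def split: prod.splits)
  qed
qed

lemma push_cancel:
  assumes "red N st" "gen_ok N (i, j, k)" "gen_ok N (j, i, k)"
  shows "push N (push N st (i, j, k)) (j, i, k) = st"
proof (cases st)
  case Nil then show ?thesis using assms by (auto simp: push_def mg_def gen_ok_def)
next
  case (Cons h st')
  show ?thesis
  proof (cases st')
    case Nil then show ?thesis using assms Cons by (auto simp: push_def mg_def gen_ok_def split: prod.splits)
  next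
    case (Cons h' st'')
    show ?thesis using assms Cons \<open>st = h # st'\<close>
      by (auto simp: push_def mg_def gen_ok_def split: prod.splits)
  qed
qed

lemma step_nf: "word_step N s t \<Longrightarrow> nf N s = nf N t"
proof (induction rule: word_step.induct)
  case (merge i j k l u v)
  have "nf N (u @ [(i, j, k), (j, l, k)] @ v) = foldl (push N) (push N (push N (nf N u) (i, j, k)) (j, l, k)) v"
    by (simp add: nf_def)
  also have "\<dots> = foldl (push N) (push N (nf N u) (i, l, k)) v"
    using merge red_nf by (simp add: push_merge)
  also have "\<dots> = nf N (u @ [(i, l, k)] @ v)" by (simp add: nf_def)
  finally show ?case .
next
  case (cancel i j k u v)
  have "nf N (u @ [(i, j, k), (j, i, k)] @ v) = foldl (push N) (push N (push N (nf N u) (i, j, k)) (j, i, k)) v"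
    by (simp add: nf_def)
  also have "\<dots> = foldl (push N) (nf N u) v"
    using cancel red_nf by (simp add: push_cancel)
  also have "\<dots> = nf N (u @ v)" by (simp add: nf_def)
  finally show ?case .
qed

lemma word_eq_nf: "word_eq N s t \<Longrightarrow> nf N s = nf N t"
  unfolding word_eq_def
proof (induction rule: rtranclp_induct)
  case base then show ?case by simp
next
  case (step y z) then show ?case by (auto dest: step_nf)
qed

lemma word_eq_refl: "word_eq N s s" by (simp add: word_eq_def)

lemma word_eq_trans: "word_eq N a b \<Longrightarrow> word_eq N b c \<Longrightarrow> word_eq N a c"
  unfolding word_eq_def by (rule rtranclp_trans)

lemma step_word_eq: "word_step N a b \<Longrightarrow> word_eq N a b"
  unfolding word_eq_def by (rule r_into_rtranclp) simp

lemma step_app_left: "word_step N a b \<Longrightarrow> word_step N (c @ a) (c @ b)"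
proof (induction rule: word_step.induct)
  case (merge i j k l u v)
  then show ?case using word_step.merge[of N i j k l "c @ u" v] by simp
next
  case (cancel i j k u v)
  then show ?case using word_step.cancel[of N i j k "c @ u" v] by simp
qed

lemma step_app_right: "word_step N a b \<Longrightarrow> word_step N (a @ c) (b @ c)"
proof (induction rule: word_step.induct)
  case (merge i j k l u v)
  then show ?case using word_step.merge[of N i j k l u "v @ c"] by simp
next
  case (cancel i j k u v)
  then show ?case using word_step.cancel[of N i j k u "v @ c"] by simp
qed

lemma word_eq_app_left: "word_eq N a b \<Longrightarrow> word_eq N (c @ a) (c @ b)"
  unfolding word_eq_def
proof (induction rule: rtranclp_induct)
  case base then show ?case by simp
next
  case (step y z)
  then have "(sup (word_step N) (word_step N)\<inverse>\<inverse>) (c @ y) (c @ z)"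
    by (auto intro: step_app_left)
  with step.IH show ?case by (rule rtranclp.rtrancl_into_rtrancl)
qed

lemma word_eq_app_right: "word_eq N a b \<Longrightarrow> word_eq N (a @ c) (b @ c)"
  unfolding word_eq_def
proof (induction rule: rtranclp_induct)
  case base then show ?case by simp
next
  case (step y z)
  then have "(sup (word_step N) (word_step N)\<inverse>\<inverse>) (y @ c) (z @ c)"
    by (auto intro: step_app_right)
  with step.IH show ?case by (rule rtranclp.rtrancl_into_rtrancl)
qed

lemma word_eq_push: "word_eq N (rev st @ [g]) (rev (push N st g))"
proof (cases st)
  case Nil then show ?thesis by (simp add: push_def word_eq_refl)
next
  case (Cons h st')
  obtain a b c where h: "h = (a, b, c)" by (cases h)
  obtain a' b' c' where g: "g = (a', b', c')" by (cases g)
  show ?thesis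
  proof (cases "mg N h g")
    case False then show ?thesis using Cons by (simp add: push_def word_eq_refl)
  next
    case True
    then have gk: "gen_ok N (a, b, c)" "gen_ok N (b, b', c)" "a' = b" "c' = c"
      using h g by (auto simp: mg_def)
    show ?thesis
    proof (cases "a = b'")
      case True
      have "word_step N (rev st' @ [(a, b, c), (b, a, c)] @ []) (rev st' @ [])"
        using gk True by (intro word_step.cancel) auto
      then show ?thesis using Cons h g gk True \<open>mg N h g\<close> by (auto simp: push_def intro: step_word_eq)
    next
      case False
      have "word_step N (rev st' @ [(a, b, c), (b, b', c)] @ []) (rev st' @ [(a, b', c)] @ [])"
        using gk False by (intro word_step.merge) auto
      then show ?thesis using Cons h g gk False \<open>mg N h g\<close> by (auto simp: push_def intro: step_word_eq)
    qed
  qed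
qed

lemma word_eq_sym: "word_eq N a b \<Longrightarrow> word_eq N b a"
proof -
  assume "word_eq N a b"
  then show "word_eq N b a"
    unfolding word_eq_def
  proof (induction rule: rtranclp_induct)
    case base then show ?case by simp
  next
    case (step y z)
    then have "(sup (word_step N) (word_step N)\<inverse>\<inverse>) z y" by auto
    then have "(sup (word_step N) (word_step N)\<inverse>\<inverse>)\<^sup>*\<^sup>* z y" by (rule r_into_rtranclp)
    then show ?case using step.IH by (rule rtranclp_trans)
  qed
qed

lemma word_eq_rev_nf: "word_eq N s (rev (nf N s))"
proof (induction s rule: rev_induct)
  case Nil then show ?case by (simp add: word_eq_refl)
next
  case (snoc g s)
  have "word_eq N (s @ [g]) (rev (nf N s) @ [g])" using snoc by (rule word_eq_app_right)
  then have "word_eq N (s @ [g]) (rev (push N (nf N s) g))" using word_eq_push word_eq_trans by blast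
  then show ?case by (simp add: nf_snoc)
qed

lemma word_eq_iff: "word_eq N s t \<longleftrightarrow> nf N s = nf N t"
  using word_eq_rev_nf[of N s] word_eq_rev_nf[of N t] word_eq_nf word_eq_sym word_eq_trans
  by metis

lemma push_last: "2 \<le> length st \<Longrightarrow> last (push N st g) = last st"
  by (cases st) (auto simp: push_def)

lemma push_grow: "length st \<le> 1 \<Longrightarrow> 2 \<le> length (push N st g) \<Longrightarrow> push N st g = g # st"
  by (cases st) (auto simp: push_def split: if_splits)

lemma nf_prefix: "2 \<le> length (nf N s) \<Longrightarrow> \<exists>t \<le> length s. nf N (take t s) = [last (nf N s)]"
proof (induction s rule: rev_induct)
  case Nil then show ?case by simp
next
  case (snoc g s)
  show ?case
  proof (cases "2 \<le> length (nf N s)")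
    case True
    then obtain t where t: "t \<le> length s" "nf N (take t s) = [last (nf N s)]" using snoc.IH by blast
    then show ?thesis using True by (intro exI[of _ t]) (auto simp: nf_snoc push_last)
  next
    case False
    then have "push N (nf N s) g = g # nf N s" using snoc.prems by (intro push_grow) (auto simp: nf_snoc)
    moreover have "length (nf N s) = 1" using snoc.prems False calculation by (auto simp: nf_snoc)
    ultimately show ?thesis
      by (intro exI[of _ "length s"]) (auto simp: nf_snoc length_Suc_conv)
  qed
qed

fun endp :: "nat \<Rightarrow> gen list \<Rightarrow> nat" where
  "endp v [] = v"
| "endp v ((a, b, k) # s) = endp b s"

lemma path_append: "path_from N v (a @ b) \<longleftrightarrow> path_from N v a \<and> path_from N (endp v a) b"
  by (induction v a rule: endp.induct) auto

lemma endp_append: "endp v (a @ b) = endp (endp v a) b"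
  by (induction v a rule: endp.induct) auto

lemma path_nf: "path_from N v s \<Longrightarrow> path_from N v (rev (nf N s)) \<and> endp v (rev (nf N s)) = endp v s"
proof (induction s rule: rev_induct)
  case Nil then show ?case by simp
next
  case (snoc g s)
  obtain a' b' c' where g: "g = (a', b', c')" by (cases g)
  from snoc.prems have ps: "path_from N v s" and a': "a' = endp v s" and gok: "gen_ok N g"
    by (auto simp: path_append g)
  with snoc.IH have IH: "path_from N v (rev (nf N s))" "endp v (rev (nf N s)) = endp v s" by auto
  show ?case
  proof (cases "nf N s")
    case Nil then show ?thesis using IH a' gok g by (auto simp: nf_snoc push_def endp_append)
  next
    case (Cons h st')
    obtain a b c where h: "h = (a, b, c)" by (cases h)
    have pst: "path_from N v (rev st')" and ha: "a = endp v (rev st')" and hb: "b = endp v s"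
      using IH Cons h by (auto simp: path_append endp_append)
    show ?thesis
    proof (cases "mg N h g")
      case False then show ?thesis using IH Cons a' gok g h pst ha hb by (auto simp: nf_snoc push_def path_append endp_append)
    next
      case True
      then have "c' = c" "a' = b" "gen_ok N h" using h g by (auto simp: mg_def)
      then show ?thesis using IH Cons a' gok g h pst ha hb True
        by (auto simp: nf_snoc push_def path_append endp_append gen_ok_def)
    qed
  qed
qed

lemma path_gens: "path_from N v s \<Longrightarrow> set s \<subseteq> {1..N} \<times> {1..N} \<times> {-1, 1}"
  by (induction v s rule: endp.induct) (auto simp: gen_ok_def)



definition HS :: "nat \<Rightarrow> nat \<Rightarrow> gen \<Rightarrow> gen list set" where
  "HS N i x = {s. path_from N i s \<and> word_eq N s [x] \<and> (\<forall>n<length s. \<not> word_eq N (take n s) [x])}"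

lemma nf_single[simp]: "nf N [x] = [x]" by (simp add: nf_def push_def)

lemma nf_cancel2:
  assumes "gen_ok N (a, b, k)" "gen_ok N (b, a, k)"
  shows "nf N ((b, a, k) # (a, b, k) # w) = nf N w"
proof -
  have "nf N [(b, a, k), (a, b, k)] = []" using assms by (simp add: nf_def push_def mg_def)
  then show ?thesis using nf_append[of N "[(b, a, k), (a, b, k)]" w] by (simp add: nf_def)
qed

lemma nf_merge2:
  assumes "gen_ok N (a, b, k)" "gen_ok N (b, c, k)" "a \<noteq> c"
  shows "nf N [(a, b, k), (b, c, k)] = [(a, c, k)]"
  using assms by (simp add: nf_def push_def mg_def)

lemma nf_nomerge2:
  assumes "k \<noteq> k'"
  shows "nf N [(a, b, k), (b, c, k')] = [(b, c, k'), (a, b, k)]"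
  using assms by (simp add: nf_def push_def mg_def)

lemma nil_not_eq: "\<not> word_eq N [] [x]"
  by (simp add: word_eq_iff)

lemma HS_a: "gen_ok N (i, j, k) \<Longrightarrow> [(i, j, k)] \<in> HS N i (i, j, k)"
  by (auto simp: HS_def word_eq_iff)

lemma word_eq_cons: "word_eq N s t \<Longrightarrow> word_eq N (g # s) (g # t)"
  using word_eq_app_left[of N s t "[g]"] by simp

lemma HS_b:
  assumes "gen_ok N (i, m, k)" "gen_ok N (m, j, k)" "gen_ok N (m, i, k)" "gen_ok N (i, j, k)" "i \<noteq> j" "m \<noteq> j"
    and s: "s \<in> HS N m (m, j, k)"
  shows "(i, m, k) # s \<in> HS N i (i, j, k)"
proof -
  from s have ps: "path_from N m s" and ws: "word_eq N s [(m, j, k)]"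
    and hs: "\<And>n. n < length s \<Longrightarrow> \<not> word_eq N (take n s) [(m, j, k)]"
    by (auto simp: HS_def)
  have "word_eq N ((i, m, k) # s) [(i, m, k), (m, j, k)]" using ws by (rule word_eq_cons)
  then have w1: "word_eq N ((i, m, k) # s) [(i, j, k)]"
    using nf_merge2[of N i m k j] assms by (simp add: word_eq_iff)
  have key: "\<not> word_eq N ((i, m, k) # w) [(i, j, k)]" if "\<not> word_eq N w [(m, j, k)]" for w
  proof
    assume "word_eq N ((i, m, k) # w) [(i, j, k)]"
    then have "word_eq N ((m, i, k) # (i, m, k) # w) [(m, i, k), (i, j, k)]" by (rule word_eq_cons)
    then have "nf N w = [(m, j, k)]"
      using nf_cancel2[of N i m k w] nf_merge2[of N m i k j] assms by (simp add: word_eq_iff)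
    with that show False by (simp add: word_eq_iff)
  qed
  have "\<not> word_eq N (take n ((i, m, k) # s)) [(i, j, k)]" if "n < length ((i, m, k) # s)" for n
  proof (cases n)
    case 0 then show ?thesis by (simp add: nil_not_eq)
  next
    case (Suc n') then show ?thesis using that hs key by simp
  qed
  then show ?thesis using assms ps w1 by (auto simp: HS_def)
qed

lemma HS_inj:
  assumes "s1 \<in> HS N m y" "s1' \<in> HS N m y" "s1 @ s2 = s1' @ s2'"
  shows "s1 = s1' \<and> s2 = s2'"
proof -
  have "\<not> length s1 < length s1'" if "s1 \<in> HS N m y" "s1' \<in> HS N m y" "s1 @ s2 = s1' @ s2'"
    for s1 s1' s2 s2'
  proof
    assume l: "length s1 < length s1'"
    have "take (length s1) (s1 @ s2) = take (length s1) (s1' @ s2')" using that by simp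
    then have "s1 = take (length s1) s1'" using l by simp
    then show False using that l by (auto simp: HS_def)
  qed
  then have "length s1 = length s1'" using assms by (metis linorder_neqE_nat)
  then show ?thesis using assms by simp
qed

lemma HS_c:
  assumes "gen_ok N (i, m, -k)" "gen_ok N (m, i, -k)" "gen_ok N (i, j, k)" "k \<noteq> 0"
    and s1: "s1 \<in> HS N m (m, i, -k)" and s2: "s2 \<in> HS N i (i, j, k)"
  shows "(i, m, -k) # s1 @ s2 \<in> HS N i (i, j, k)"
proof -
  from s1 have ps1: "path_from N m s1" and ws1: "word_eq N s1 [(m, i, -k)]"
    and hs1: "\<And>n. n < length s1 \<Longrightarrow> \<not> word_eq N (take n s1) [(m, i, -k)]"
    by (auto simp: HS_def)
  from s2 have ps2: "path_from N i s2" and ws2: "word_eq N s2 [(i, j, k)]"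
    and hs2: "\<And>n. n < length s2 \<Longrightarrow> \<not> word_eq N (take n s2) [(i, j, k)]"
    by (auto simp: HS_def)
  have nfs1: "nf N s1 = [(m, i, -k)]" using ws1 by (simp add: word_eq_iff)
  have "endp m s1 = i" using path_nf[OF ps1] nfs1 by simp
  then have path: "path_from N i ((i, m, -k) # s1 @ s2)" using ps1 ps2 assms by (simp add: path_append)
  have "word_eq N ((i, m, -k) # s1) [(i, m, -k), (m, i, -k)]" using ws1 by (rule word_eq_cons)
  then have "nf N ((i, m, -k) # s1) = []" using nf_cancel2[of N m i "-k" "[]"] assms
    by (simp add: word_eq_iff)
  then have K: "nf N ((i, m, -k) # s1 @ w) = nf N w" for w
    using nf_append[of N "(i, m, -k) # s1" w] by (simp add: nf_def)
  have w1: "word_eq N ((i, m, -k) # s1 @ s2) [(i, j, k)]" using ws2 K by (simp add: word_eq_iff)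
  have mid: "\<not> word_eq N ((i, m, -k) # take n s1) [(i, j, k)]" if n: "n < length s1" for n
  proof
    assume "word_eq N ((i, m, -k) # take n s1) [(i, j, k)]"
    then have "word_eq N ((m, i, -k) # (i, m, -k) # take n s1) [(m, i, -k), (i, j, k)]"
      by (rule word_eq_cons)
    moreover have "k \<noteq> -k" using assms by simp
    ultimately have nw: "nf N (take n s1) = [(i, j, k), (m, i, -k)]"
      using nf_cancel2[of N i m "-k" "take n s1"] nf_nomerge2[of "-k" k N m i j] assms
      by (simp add: word_eq_iff)
    then obtain t where t: "t \<le> length (take n s1)" "nf N (take t (take n s1)) = [(m, i, -k)]"
      using nf_prefix[of N "take n s1"] by auto
    have ln: "length (take n s1) = n" using n by simp
    have "t \<noteq> n"
    proof
      assume "t = n"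
      then have "nf N (take n s1) = [(m, i, -k)]" using t ln by simp
      then show False using nw by simp
    qed
    then have "t < n" using t ln by simp
    then have "word_eq N (take t s1) [(m, i, -k)]" using t by (simp add: word_eq_iff min_def)
    then show False using hs1 \<open>t < n\<close> n by simp
  qed
  have "\<not> word_eq N (take n ((i, m, -k) # s1 @ s2)) [(i, j, k)]"
    if "n < length ((i, m, -k) # s1 @ s2)" for n
  proof (cases n)
    case 0 then show ?thesis by (simp add: nil_not_eq)
  next
    case (Suc n')
    show ?thesis
    proof (cases "n' < length s1")
      case True then show ?thesis using Suc mid by simp
    next
      case False
      then have "take n ((i, m, -k) # s1 @ s2) = (i, m, -k) # s1 @ take (n' - length s1) s2"
        using Suc by simp
      moreover have "n' - length s1 < length s2" using that Suc False by simp
      ultimately show ?thesis using K hs2 by (simp add: word_eq_iff)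
    qed
  qed
  then show ?thesis using path w1 by (auto simp: HS_def)
qed



definition W :: "(nat \<Rightarrow> nat \<Rightarrow> int \<Rightarrow> real) \<Rightarrow> gen list \<Rightarrow> real" where
  "W p s = prod_list (map (\<lambda>(a, b, k). p a b k) s)"

definition HL :: "nat \<Rightarrow> nat \<Rightarrow> gen \<Rightarrow> nat \<Rightarrow> gen list set" where
  "HL N i x L = {s \<in> HS N i x. length s \<le> L}"

lemma W_Cons[simp]: "W p ((a, b, k) # s) = p a b k * W p s" by (simp add: W_def)
lemma W_append[simp]: "W p (s @ t) = W p s * W p t" by (simp add: W_def)

lemma fin_HL: "finite (HL N i x L)"
proof -
  have "HL N i x L \<subseteq> {xs. set xs \<subseteq> {1..N} \<times> {1..N} \<times> {-1, 1} \<and> length xs \<le> L}"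
    using path_gens by (auto simp: HL_def HS_def)
  moreover have "finite {xs. set xs \<subseteq> {1..N} \<times> {1..N} \<times> ({-1, 1}::int set) \<and> length xs \<le> L}"
    by (rule finite_lists_length_le) auto
  ultimately show ?thesis by (rule finite_subset)
qed

lemma W_nonneg:
  assumes "\<And>a b k. gen_ok N (a, b, k) \<Longrightarrow> 0 \<le> p a b k"
  shows "path_from N v s \<Longrightarrow> 0 \<le> W p s"
  by (induction v s rule: endp.induct) (auto simp: assms W_def)

lemma hit_sum:
  "(\<Sum>m = 0..L. hit_prob N p i x m * lam ^ m) = (\<Sum>s \<in> HL N i x L. W p s * lam ^ length s)"
proof -
  have "(\<Sum>s \<in> HL N i x L. W p s * lam ^ length s)
      = (\<Sum>m \<in> {0..L}. \<Sum>s \<in> {s. s \<in> HL N i x L \<and> length s = m}. W p s * lam ^ length s)"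
    using fin_HL[of N i x L] by (intro sum.group[symmetric]) (auto simp: HL_def)
  also have "\<dots> = (\<Sum>m = 0..L. hit_prob N p i x m * lam ^ m)"
  proof (rule sum.cong)
    fix m assume m: "m \<in> {0..L}"
    have e: "{s. s \<in> HL N i x L \<and> length s = m} = {s. length s = m \<and> path_from N i s \<and> word_eq N s [x]
                \<and> (\<forall>n<m. \<not> word_eq N (take n s) [x])}"
      using m by (auto simp: HL_def HS_def)
    have "(\<Sum>s \<in> {s. s \<in> HL N i x L \<and> length s = m}. W p s * lam ^ length s)
        = (\<Sum>s \<in> {s. s \<in> HL N i x L \<and> length s = m}. W p s * lam ^ m)"
      by (rule sum.cong) auto
    also have "\<dots> = (\<Sum>s \<in> {s. s \<in> HL N i x L \<and> length s = m}. W p s) * lam ^ m"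
      by (simp add: sum_distrib_right)
    finally show "(\<Sum>s \<in> {s. s \<in> HL N i x L \<and> length s = m}. W p s * lam ^ length s) = hit_prob N p i x m * lam ^ m"
      unfolding e by (simp add: hit_prob_def W_def)
  qed simp
  finally show ?thesis ..
qed



lemma main_ind:
  fixes N :: nat and p :: "nat \<Rightarrow> nat \<Rightarrow> int \<Rightarrow> real" and lam :: real
  assumes pnn: "\<And>a b k. gen_ok N (a, b, k) \<Longrightarrow> 0 \<le> p a b k" and lam: "0 \<le> lam"
  shows "\<forall>i j k. gen_ok N (i, j, k) \<longrightarrow> 0 \<le> aseq N p lam n i j k \<and>
     aseq N p lam n i j k \<le> (\<Sum>s \<in> HL N i (i, j, k) (2^(n+1) - 1). W p s * lam ^ length s)"
proof (induction n)
  case 0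
  show ?case
  proof (intro allI impI)
    fix i j k assume g: "gen_ok N (i, j, k)"
    have "[(i, j, k)] \<in> HL N i (i, j, k) (2^(0+1) - 1)" using HS_a[OF g] by (simp add: HL_def)
    moreover have "\<forall>s \<in> HL N i (i, j, k) (2^(0+1) - 1). 0 \<le> W p s * lam ^ length s"
      using W_nonneg[OF pnn] lam by (auto simp: HL_def HS_def)
    ultimately have "W p [(i, j, k)] * lam ^ length [(i, j, k)]
       \<le> (\<Sum>s \<in> HL N i (i, j, k) (2^(0+1) - 1). W p s * lam ^ length s)"
      by (intro member_le_sum fin_HL) auto
    then show "0 \<le> aseq N p lam 0 i j k \<and>
     aseq N p lam 0 i j k \<le> (\<Sum>s \<in> HL N i (i, j, k) (2^(0+1) - 1). W p s * lam ^ length s)"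
      using pnn[OF g] lam by (simp add: fmap_def W_def mult.commute)
  qed
next
  case (Suc n)
  define a where "a = aseq N p lam n"
  define L where "L = (2::nat)^(n+1) - 1"
  define F where "F = (\<lambda>s. W p s * lam ^ length s)"
  define G where "G = (\<lambda>i x. \<Sum>s\<in>HL N i x L. F s)"
  define V where "V = {1..N}"
  have p1: "(1::nat) \<le> 2^n" by simp
  have e: "L = 2 * 2^n - 1" unfolding L_def by simp
  have L1: "1 \<le> L" using e p1 by arith
  have e2: "(2::nat)^(Suc n + 1) = 2 * (2 * 2^n)" by simp
  have L': "2^(Suc n + 1) - 1 = Suc (2 * L)" unfolding e2 using e p1 by arith
  have IH: "\<And>i j k. gen_ok N (i, j, k) \<Longrightarrow> 0 \<le> a i j k \<and> a i j k \<le> G i (i, j, k)"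
    using Suc.IH unfolding a_def G_def F_def L_def by blast
  have Fnn: "\<And>s v y. s \<in> HS N v y \<Longrightarrow> 0 \<le> F s"
    using W_nonneg[OF pnn] lam unfolding F_def HS_def by auto
  have Gnn: "\<And>v y. 0 \<le> G v y"
    unfolding G_def HL_def by (rule sum_nonneg) (use Fnn in auto)
  have gok: "\<And>a b k. gen_ok N (a, b, k) \<longleftrightarrow> a \<in> V \<and> b \<in> V \<and> a \<noteq> b \<and> k \<in> {-1, 1}"
    unfolding V_def gen_ok_def by simp
  show ?case
  proof (intro allI impI)
    fix i j k assume g: "gen_ok N (i, j, k)"
    have iV: "i \<in> V" "j \<in> V" "i \<noteq> j" and k: "k \<in> {-1, 1}" using g gok by auto
    then have mk: "-k \<in> {-1, 1}" "k \<noteq> 0" "-k \<noteq> k" by auto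
    define x where "x = (i, j, k)"
    define B where "B = HL N i x (Suc (2 * L))"
    define Bg where "Bg = (\<lambda>g. {s \<in> B. hd s = g})"
    have finB: "finite B" unfolding B_def by (rule fin_HL)
    have finBg: "\<And>g. finite (Bg g)" unfolding Bg_def using finB by simp
    have FB: "\<And>s. s \<in> B \<Longrightarrow> 0 \<le> F s" unfolding B_def HL_def using Fnn[of _ i x] by blast
    have FBg: "\<And>g s. s \<in> Bg g \<Longrightarrow> 0 \<le> F s" unfolding Bg_def using FB by auto
    have T1: "lam * p i j k \<le> (\<Sum>s\<in>Bg (i, j, k). F s)"
    proof -
      have "[(i, j, k)] \<in> Bg (i, j, k)" using HS_a[OF g] unfolding Bg_def B_def HL_def x_def by simp
      then have "F [(i, j, k)] \<le> (\<Sum>s\<in>Bg (i, j, k). F s)"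
        by (intro member_le_sum finBg FBg) auto
      then show ?thesis by (simp add: F_def W_def mult.commute)
    qed
    have T2: "lam * (p i m k * G m (m, j, k)) \<le> (\<Sum>s\<in>Bg (i, m, k). F s)" if m: "m \<in> V - {i, j}" for m
    proof -
      have g1: "gen_ok N (i, m, k)" "gen_ok N (m, j, k)" "gen_ok N (m, i, k)" using m iV k gok by auto
      have "lam * (p i m k * G m (m, j, k)) = (\<Sum>s\<in>HL N m (m, j, k) L. F ((i, m, k) # s))"
        unfolding G_def F_def by (simp add: sum_distrib_left mult_ac)
      also have "\<dots> = (\<Sum>s\<in>(Cons (i, m, k)) ` HL N m (m, j, k) L. F s)"
        by (simp add: sum.reindex)
      also have "\<dots> \<le> (\<Sum>s\<in>Bg (i, m, k). F s)"
      proof (rule sum_mono2[OF finBg])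
        show "(#) (i, m, k) ` HL N m (m, j, k) L \<subseteq> Bg (i, m, k)"
          using HS_b[OF g1 g] iV m L1 unfolding Bg_def B_def HL_def x_def by auto
      qed (use FBg in auto)
      finally show ?thesis .
    qed
    have T3: "lam * (p i m (-k) * G m (m, i, -k) * G i (i, j, k)) \<le> (\<Sum>s\<in>Bg (i, m, -k). F s)"
      if m: "m \<in> V - {i}" for m
    proof -
      have g1: "gen_ok N (i, m, -k)" "gen_ok N (m, i, -k)" using m iV mk gok by auto
      define H where "H = (\<lambda>(s1, s2). (i, m, -k) # s1 @ s2)"
      have "lam * (p i m (-k) * G m (m, i, -k) * G i (i, j, k))
          = (\<Sum>s1\<in>HL N m (m, i, -k) L. \<Sum>s2\<in>HL N i (i, j, k) L. lam * p i m (-k) * (F s1 * F s2))"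
        unfolding G_def by (simp add: sum_product sum_distrib_left mult_ac)
      also have "\<dots> = (\<Sum>s1\<in>HL N m (m, i, -k) L. \<Sum>s2\<in>HL N i (i, j, k) L. F (H (s1, s2)))"
        unfolding F_def H_def by (simp add: power_add mult_ac)
      also have "\<dots> = (\<Sum>q\<in>HL N m (m, i, -k) L \<times> HL N i (i, j, k) L. F (H q))"
        using sum.cartesian_product[of "\<lambda>s1 s2. F (H (s1, s2))"] by (simp add: case_prod_unfold)
      also have "\<dots> = (\<Sum>s\<in>H ` (HL N m (m, i, -k) L \<times> HL N i (i, j, k) L). F s)"
      proof (rule sum.reindex[symmetric, unfolded comp_def])
        show "inj_on H (HL N m (m, i, -k) L \<times> HL N i (i, j, k) L)"
        proof (rule inj_onI)
          fix q1 q2 assume q: "q1 \<in> HL N m (m, i, -k) L \<times> HL N i (i, j, k) L"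
            "q2 \<in> HL N m (m, i, -k) L \<times> HL N i (i, j, k) L" "H q1 = H q2"
          obtain s1 s2 where q1: "q1 = (s1, s2)" by (cases q1)
          obtain s1' s2' where q2: "q2 = (s1', s2')" by (cases q2)
          have "s1 \<in> HS N m (m, i, -k)" "s1' \<in> HS N m (m, i, -k)" "s1 @ s2 = s1' @ s2'"
            using q q1 q2 unfolding HL_def H_def by auto
          then show "q1 = q2" using HS_inj q1 q2 by blast
        qed
      qed
      also have "\<dots> \<le> (\<Sum>s\<in>Bg (i, m, -k). F s)"
      proof (rule sum_mono2[OF finBg])
        show "H ` (HL N m (m, i, -k) L \<times> HL N i (i, j, k) L) \<subseteq> Bg (i, m, -k)"
        proof
          fix s assume "s \<in> H ` (HL N m (m, i, -k) L \<times> HL N i (i, j, k) L)"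
          then obtain s1 s2 where s: "s = (i, m, -k) # s1 @ s2" "s1 \<in> HL N m (m, i, -k) L"
            "s2 \<in> HL N i (i, j, k) L" unfolding H_def by auto
          then have "s \<in> HS N i (i, j, k)" using HS_c[OF g1 g mk(2)] unfolding HL_def by auto
          moreover have "length s \<le> Suc (2 * L)" using s unfolding HL_def by auto
          ultimately show "s \<in> Bg (i, m, -k)" using s unfolding Bg_def B_def HL_def x_def by auto
        qed
      qed (use FBg in auto)
      finally show ?thesis .
    qed
    show "0 \<le> aseq N p lam (Suc n) i j k \<and>
       aseq N p lam (Suc n) i j k \<le> (\<Sum>s \<in> HL N i (i, j, k) (2^(Suc n+1) - 1). W p s * lam ^ length s)"
    proof
      have eqa: "aseq N p lam (Suc n) i j k = lam * (p i j k + (\<Sum>m\<in>V-{i,j}. p i m k * a m j k)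
          + (\<Sum>m\<in>V-{i}. p i m (-k) * a m i (-k) * a i j k))"
        by (simp add: a_def fmap_def V_def)
      have pp: "0 \<le> p i m k'" if "m \<in> V - {i}" "k' \<in> {-1, 1}" for m k'
        using pnn that iV gok by auto
      have aij: "0 \<le> a i j k" "a i j k \<le> G i (i, j, k)" using IH g by auto
      have a2: "0 \<le> a m j k \<and> a m j k \<le> G m (m, j, k)" if "m \<in> V - {i, j}" for m
        using IH that iV k gok by auto
      have a3: "0 \<le> a m i (-k) \<and> a m i (-k) \<le> G m (m, i, -k)" if "m \<in> V - {i}" for m
        using IH that iV mk gok by auto
      have S2n: "0 \<le> (\<Sum>m\<in>V-{i,j}. p i m k * a m j k)"
        using pp a2 k by (intro sum_nonneg mult_nonneg_nonneg) auto
      have S3n: "0 \<le> (\<Sum>m\<in>V-{i}. p i m (-k) * a m i (-k) * a i j k)"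
        using pp a3 mk aij by (intro sum_nonneg mult_nonneg_nonneg) auto
      show "0 \<le> aseq N p lam (Suc n) i j k"
        unfolding eqa using S2n S3n lam pp[of j k] iV k by (intro mult_nonneg_nonneg add_nonneg_nonneg) auto
      have S2: "(\<Sum>m\<in>V-{i,j}. p i m k * a m j k) \<le> (\<Sum>m\<in>V-{i,j}. p i m k * G m (m, j, k))"
        using pp a2 k by (intro sum_mono mult_left_mono) auto
      have S3: "(\<Sum>m\<in>V-{i}. p i m (-k) * a m i (-k) * a i j k)
          \<le> (\<Sum>m\<in>V-{i}. p i m (-k) * G m (m, i, -k) * G i (i, j, k))"
      proof (rule sum_mono)
        fix m assume m: "m \<in> V - {i}"
        have "p i m (-k) * a m i (-k) \<le> p i m (-k) * G m (m, i, -k)"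
          using pp[OF m mk(1)] a3[OF m] by (intro mult_left_mono) auto
        then show "p i m (-k) * a m i (-k) * a i j k \<le> p i m (-k) * G m (m, i, -k) * G i (i, j, k)"
          using aij pp[OF m mk(1)] a3[OF m] Gnn by (intro mult_mono) auto
      qed
      define Tg where "Tg = (\<lambda>g. \<Sum>s\<in>Bg g. F s)"
      have "aseq N p lam (Suc n) i j k \<le> lam * (p i j k + (\<Sum>m\<in>V-{i,j}. p i m k * G m (m, j, k))
          + (\<Sum>m\<in>V-{i}. p i m (-k) * G m (m, i, -k) * G i (i, j, k)))"
        unfolding eqa using S2 S3 lam by (intro mult_left_mono) auto
      also have "\<dots> = lam * p i j k + (\<Sum>m\<in>V-{i,j}. lam * (p i m k * G m (m, j, k)))
          + (\<Sum>m\<in>V-{i}. lam * (p i m (-k) * G m (m, i, -k) * G i (i, j, k)))"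
        by (simp add: distrib_left sum_distrib_left)
      also have "\<dots> \<le> Tg (i, j, k) + (\<Sum>m\<in>V-{i,j}. Tg (i, m, k)) + (\<Sum>m\<in>V-{i}. Tg (i, m, -k))"
        unfolding Tg_def using T1 T2 T3 by (intro add_mono sum_mono) auto
      also have "Tg (i, j, k) + (\<Sum>m\<in>V-{i,j}. Tg (i, m, k)) = (\<Sum>m\<in>V-{i}. Tg (i, m, k))"
      proof -
        have "V - {i, j} = (V - {i}) - {j}" by auto
        moreover have "finite (V - {i})" unfolding V_def by simp
        ultimately show ?thesis using iV sum.remove[of "V - {i}" j "\<lambda>m. Tg (i, m, k)"] by simp
      qed
      also have "(\<Sum>m\<in>V-{i}. Tg (i, m, k)) + (\<Sum>m\<in>V-{i}. Tg (i, m, -k))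
          = (\<Sum>m\<in>V-{i}. \<Sum>\<kappa>\<in>{-1, 1}. Tg (i, m, \<kappa>))"
        using k by (auto simp: sum.distrib)
      also have "\<dots> = (\<Sum>(m, \<kappa>)\<in>(V-{i}) \<times> {-1, 1}. Tg (i, m, \<kappa>))"
        by (rule sum.cartesian_product)
      also have "\<dots> = (\<Sum>g\<in>(\<lambda>(m, \<kappa>). (i, m, \<kappa>)) ` ((V-{i}) \<times> {-1, 1}). Tg g)"
      proof -
        have inj: "inj_on (\<lambda>(m::nat, \<kappa>::int). (i, m, \<kappa>)) ((V-{i}) \<times> {-1, 1})"
          by (auto simp: inj_on_def)
        show ?thesis using sum.reindex[OF inj, of Tg] by (simp add: comp_def)
      qed
      also have "\<dots> = (\<Sum>s\<in>B. F s)"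
        unfolding Tg_def Bg_def
      proof (rule sum.group)
        show "finite ((\<lambda>(m, \<kappa>). (i, m, \<kappa>)) ` ((V-{i}) \<times> {-1, 1}))" unfolding V_def by simp
        show "hd ` B \<subseteq> (\<lambda>(m, \<kappa>). (i, m, \<kappa>)) ` ((V-{i}) \<times> {-1, 1})"
        proof
          fix g assume "g \<in> hd ` B"
          then obtain s where s: "s \<in> B" "g = hd s" by auto
          then have ps: "path_from N i s" "s \<noteq> []" unfolding B_def HL_def HS_def using nil_not_eq[of N x] by auto
          then obtain a b c s' where "s = (a, b, c) # s'" by (metis list.exhaust prod_cases3)
          then show "g \<in> (\<lambda>(m, \<kappa>). (i, m, \<kappa>)) ` ((V-{i}) \<times> {-1, 1})"
            using ps s gok by (auto simp: image_iff)
        qed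
      qed (rule finB)
      finally show "aseq N p lam (Suc n) i j k \<le> (\<Sum>s \<in> HL N i (i, j, k) (2^(Suc n+1) - 1). W p s * lam ^ length s)"
        unfolding L' B_def x_def F_def .
    qed
  qed
qed

theorem lemmaA2:
  fixes N :: nat and p :: "nat \<Rightarrow> nat \<Rightarrow> int \<Rightarrow> real" and lam :: real
    and n i j :: nat and k :: int
  assumes "N \<ge> 3"
    and "\<And>a b k. a \<in> {1..N} \<Longrightarrow> b \<in> {1..N} \<Longrightarrow> a \<noteq> b \<Longrightarrow> k \<in> {-1, 1}
           \<Longrightarrow> 0 < p a b k \<and> p a b k < 1"
    and "\<And>a. a \<in> {1..N} \<Longrightarrow> (\<Sum>b \<in> {1..N} - {a}. \<Sum>k \<in> {-1, 1}. p a b k) = 1"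
    and "0 \<le> lam" and "lam \<le> 1"
    and "i \<in> {1..N}" and "j \<in> {1..N}" and "i \<noteq> j" and "k \<in> {-1, 1}"
  shows "aseq N p lam n i j k \<le> (\<Sum>m = 0..2^(n+1) - 1. hit_prob N p i (i, j, k) m * lam ^ m)"
proof -
  have pnn: "0 \<le> p a b k'" if "gen_ok N (a, b, k')" for a b k'
  proof -
    have "a \<in> {1..N}" "b \<in> {1..N}" "a \<noteq> b" "k' \<in> {-1, 1}" using that by (auto simp: gen_ok_def)
    from assms(2)[OF this] show ?thesis by simp
  qed
  have g: "gen_ok N (i, j, k)" using assms(6-9) by (simp add: gen_ok_def)
  have "aseq N p lam n i j k \<le> (\<Sum>s \<in> HL N i (i, j, k) (2^(n+1) - 1). W p s * lam ^ length s)"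
    using main_ind[where N=N and p=p and lam=lam and n=n, OF pnn assms(4)] g by blast
  then show ?thesis unfolding hit_sum .
qed

end
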